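(* Consider the PSSG described in the context in the FULL-FULL scenario: $k_1\mu_1>2L\lambda$ and $k_2\mu_2>2L\lambda$. Define $$\theta^L_1=-\frac{k_q(q_1(L+x_2)-q_2(L-x_2))+k_l(x_2-x_1)}{k_p d},\quad \theta^R_1=\frac{k_q(q_2(L-x_1)-q_1(x_1+L))+k_l(x_2-x_1)}{k_p d},$$ $$\theta^L_2=-\frac{k_q q_1(2L)+k_l(x_2-x_1)}{k_p d},\quad \theta^R_2=\frac{k_q q_2(2L)+k_l(x_2-x_1)}{k_p d}.$$ (1) If $p_1-p_2\in[\theta^R_1,\theta^R_2)$, then the Nash equilibrium of the PSSG is: every PEV at $x\in[x_1,L]$ selects station 2 with probability 1, and every PEV at $x\in[-L,x_1)$ selects station 1 with probability $\omega_1$ and station 2 with probability $1-\omega_1$, where $\omega_1$ is the unique root in $[0,1]$ of $$k_q\Big(q_1\big((x_1+L)\omega_1\big)-q_2\big(L-x_1+(x_1+L)(1-\omega_1)\big)\Big)+k_pd(p_1-p_2)+k_l(x_1-x_2)=0.$$ (2) If $p_1-p_2\in(\theta^L_2,\theta^L_1]$, then the Nash equilibrium of the PSSG is: every PEV at $x\in[-L,x_2]$ selects station 1 with probability 1, and every PEV at $x\in(x_2,L]$ selects station 1 with probability $\omega_1$ and station 2 with probability $1-\omega_1$, where $\omega_1$ is the unique root in $[0,1]$ of $$k_q\Big(q_2\big((L-x_2)(1-\omega_1)\big)-q_1\big(x_2+L+(L-x_2)\omega_1\big)\Big)+k_pd(p_2-p_1)+k_l(x_1-x_2)=0.$$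
   Context: The system is the segment $[-L,L]$ ($L>0$) with two charging stations located at $x_1<x_2$, $-L<x_1<x_2<L$. Station $i\in\{1,2\}$ has $k_i\ge 1$ (integer) identical charging ports, PEV service times with mean $1/\mu_i$ ($\mu_i>0$) and variance $\sigma_i^2$, and announces a price $p_i\in[p_{\min},p_{\max}]$. A continuum of PEVs is uniformly distributed on $[-L,L]$, generating charging requests at rate $\lambda>0$ per unit length. Each PEV at location $x$ selects station 1 or 2, possibly at random; a strategy profile is described by the probability $\omega(x)\in[0,1]$ that the PEV at $x$ selects station 1. Let $a_1=\int_{-L}^{L}\omega(x)\,dx$ and $a_2=2L-a_1$. For $0\le a<k_i\mu_i/\lambda$, $$q_i(a)=\frac{a\lambda\,(\sigma_i^2+\frac{1}{\mu_i^2})\,\rho^{k_i-1}}{2(k_i-1)!\,(k_i-\rho)^2\Big[\sum_{m=0}^{k_i-1}\frac{\rho^m}{m!}+\frac{\rho^{k_i}}{(k_i-1)!(k_i-\rho)}\Big]},\qquad \rho=\frac{a\lambda}{\mu_i},$$ is the mean waiting time at station $i$, and $q_i(a)=+\infty$ if $a\ge k_i\mu_i/\lambda$. Given $a_1,a_2$ (which a single PEV cannot change), a PEV at $x$ selecting station $i$ gets payoff $U(i;x)=-k_l|x-x_i|-k_q\,q_i(a_i)-k_p\,d\,p_i$, with constants $k_l,k_q,k_p,d>0$; a randomized choice yields the expected payoff. A Nash equilibrium of the PSSG is a profile in which every PEV's (possibly mixed) choice maximizes its expected payoff given $a_1,a_2$. *)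

theory Defs
  imports "HOL-Analysis.Analysis" "HOL-Library.Extended_Real"
begin

text \<open>Mean waiting time formula (M/G/k approximation) at a station with k ports,
  service rate mu, service-time variance sigma2, request rate lam per unit length,
  and served length a (so the arrival rate is a*lam). Meaningful for
  0 <= a < k*mu/lam.\<close>
definition waitq :: "nat \<Rightarrow> real \<Rightarrow> real \<Rightarrow> real \<Rightarrow> real \<Rightarrow> real" where
  "waitq k mu sigma2 lam a =
     (let rho = a * lam / mu in
      a * lam * (sigma2 + 1 / mu ^ 2) * rho ^ (k - 1) /
      (2 * fact (k - 1) * (real k - rho) ^ 2 *
        ((\<Sum>m<k. rho ^ m / fact m) + rho ^ k / (fact (k - 1) * (real k - rho)))))"

definition waitq_ext :: "nat \<Rightarrow> real \<Rightarrow> real \<Rightarrow> real \<Rightarrow> real \<Rightarrow> ereal" where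
  "waitq_ext k mu sigma2 lam a =
     (if a \<ge> real k * mu / lam then PInfty else ereal (waitq k mu sigma2 lam a))"

definition payoff :: "real \<Rightarrow> real \<Rightarrow> real \<Rightarrow> real \<Rightarrow> real \<Rightarrow> ereal \<Rightarrow> real \<Rightarrow> real \<Rightarrow> ereal" where
  "payoff kl kq kp d xi qi pr x = - ereal (kl * \<bar>x - xi\<bar>) - ereal kq * qi - ereal (kp * d * pr)"

text \<open>A strategy profile: omega x = probability that the PEV at x selects station 1.\<close>
definition is_profile :: "real \<Rightarrow> (real \<Rightarrow> real) \<Rightarrow> bool" where
  "is_profile L \<omega> \<longleftrightarrow> \<omega> integrable_on {-L..L} \<and> (\<forall>x\<in>{-L..L}. 0 \<le> \<omega> x \<and> \<omega> x \<le> 1)"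

definition is_NE ::
  "real \<Rightarrow> real \<Rightarrow> real \<Rightarrow> real \<Rightarrow> real \<Rightarrow> real \<Rightarrow>
   real \<Rightarrow> nat \<Rightarrow> real \<Rightarrow> real \<Rightarrow> real \<Rightarrow>
   real \<Rightarrow> nat \<Rightarrow> real \<Rightarrow> real \<Rightarrow> real \<Rightarrow> (real \<Rightarrow> real) \<Rightarrow> bool" where
  "is_NE L lam kl kq kp d x1 k1 mu1 s1 p1 x2 k2 mu2 s2 p2 \<omega> \<longleftrightarrow>
     is_profile L \<omega> \<and>
     (let a1 = integral {-L..L} \<omega>; a2 = 2 * L - a1;
          U1 = payoff kl kq kp d x1 (waitq_ext k1 mu1 s1 lam a1) p1;
          U2 = payoff kl kq kp d x2 (waitq_ext k2 mu2 s2 lam a2) p2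
      in \<forall>x\<in>{-L..L}.
           ereal (\<omega> x) * U1 x + ereal (1 - \<omega> x) * U2 x \<ge> max (U1 x) (U2 x))"

end

theory Submission
  imports Defs
begin


definition hq :: "nat \<Rightarrow> real \<Rightarrow> real" where
  "hq k r = r^k / ((real k - r)^2 * (\<Sum>m<k. r^m / fact m) + r^k * (real k - r) / fact (k - 1))"

lemma S_ge1: "0 \<le> (r::real) \<Longrightarrow> k \<ge> 1 \<Longrightarrow> 1 \<le> (\<Sum>m<k. r^m / fact m)"
proof -
  assume r: "0 \<le> r" and k: "k \<ge> 1"
  have "(\<lambda>m. r^m / fact m) 0 \<le> (\<Sum>m<k. r^m / fact m)"
    by (rule member_le_sum) (use k r in auto)
  thus ?thesis by simp
qed

lemma den_pos: "0 \<le> (r::real) \<Longrightarrow> r < real k \<Longrightarrow> k \<ge> 1 \<Longrightarrow>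
   0 < (real k - r)^2 * (\<Sum>m<k. r^m / fact m) + r^k * (real k - r) / fact (k - 1)"
proof -
  assume r: "0 \<le> r" "r < real k" and k: "k \<ge> 1"
  have "0 < (real k - r)^2 * (\<Sum>m<k. r^m / fact m)"
    using S_ge1[OF r(1) k] r by (intro mult_pos_pos) auto
  moreover have "0 \<le> r^k * (real k - r) / fact (k - 1)" using r by auto
  ultimately show ?thesis by linarith
qed

lemma hq_mono:
  assumes k: "k \<ge> 1" and r: "0 \<le> r" "r < s" "s < real k"
  shows "hq k r < hq k s"
proof -
  define S where "S = (\<lambda>t::real. \<Sum>m<k. t^m / fact m)"
  define D where "D = (\<lambda>t::real. (real k - t)^2 * S t + t^k * (real k - t) / fact (k - 1))"
  have Dr: "D r > 0" "D s > 0" using den_pos[of r k] den_pos[of s k] r k unfolding D_def S_def by auto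
  have hq: "hq k t = t^k / D t" for t unfolding hq_def D_def S_def by simp
  show ?thesis
  proof (cases "r = 0")
    case True
    then have "hq k r = 0" using k by (simp add: hq)
    moreover have "hq k s > 0" using Dr r by (simp add: hq)
    ultimately show ?thesis by simp
  next
    case False
    then have rp: "r > 0" using r by simp
    have t1: "r^k * S s \<le> s^k * S r"
      unfolding S_def sum_distrib_left
    proof (rule sum_mono)
      fix m assume "m \<in> {..<k}"
      then have mk: "m + (k - m) = k" by simp
      have "r^k * s^m = (r^m * s^m) * r^(k-m)" by (metis mk power_add mult.commute mult.left_commute)
      also have "\<dots> \<le> (r^m * s^m) * s^(k-m)" using r by (intro mult_left_mono power_mono) auto
      also have "\<dots> = s^k * r^m" by (metis mk power_add mult.commute mult.left_commute)
      finally have "r^k * s^m \<le> s^k * r^m" .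
      thus "r ^ k * (s ^ m / fact m) \<le> s ^ k * (r ^ m / fact m)"
        by (simp add: divide_right_mono times_divide_eq_right)
    qed
    have t2: "(real k - s)^2 \<le> (real k - r)^2" using r by (intro power_mono) auto
    have "r^k * ((real k - s)^2 * S s) \<le> s^k * ((real k - r)^2 * S r)"
    proof -
      have "r^k * ((real k - s)^2 * S s) = (real k - s)^2 * (r^k * S s)" by simp
      also have "\<dots> \<le> (real k - r)^2 * (s^k * S r)"
        using S_ge1[of s k] k rp r by (intro mult_mono[OF t2 t1]) (auto simp: S_def)
      finally show ?thesis by (simp add: mult_ac)
    qed
    moreover have "r^k * (s^k * (real k - s) / fact (k - 1)) < s^k * (r^k * (real k - r) / fact (k - 1))"
    proof -
      have "0 < r^k * s^k / fact (k-1)" using rp r by simp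
      then have "(r^k * s^k / fact (k-1)) * (real k - s) < (r^k * s^k / fact (k-1)) * (real k - r)"
        using r by (intro mult_strict_left_mono) auto
      thus ?thesis by (simp add: field_simps)
    qed
    ultimately have "r^k * D s < s^k * D r" unfolding D_def by (simp add: distrib_left)
    thus ?thesis unfolding hq using Dr by (simp add: divide_less_eq less_divide_eq field_simps)
  qed
qed

lemma waitq_eq:
  assumes k: "k \<ge> 1" and mu: "mu > 0" and lam: "lam > 0" and a: "0 \<le> a" "a * lam / mu < real k"
  shows "waitq k mu s lam a = (mu * (s + 1 / mu^2) / (2 * fact (k - 1))) * hq k (a * lam / mu)"
proof -
  define r where "r = a * lam / mu"
  have alam: "a * lam = mu * r" using mu unfolding r_def by simp
  have r0: "0 \<le> r" "r < real k" using a mu lam unfolding r_def by auto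
  define S where "S = (\<Sum>m<k. r^m / fact m)"
  have kr: "real k - r \<noteq> 0" using r0 by simp
  have f: "(fact (k - 1) :: real) \<noteq> 0" by simp
  have rk: "r^k = r * r^(k-1)" using k by (metis Suc_diff_le diff_Suc_1 power_Suc)
  have "waitq k mu s lam a = mu * r * (s + 1/mu^2) * r^(k-1) /
      (2 * fact (k-1) * (real k - r)^2 * (S + r^k / (fact (k-1) * (real k - r))))"
    unfolding waitq_def Let_def r_def[symmetric] S_def by (simp add: alam)
  also have "\<dots> = (mu * (s + 1 / mu^2) / (2 * fact (k - 1))) *
      (r^k / ((real k - r)^2 * S + r^k * (real k - r) / fact (k - 1)))"
  proof -
    have den: "2 * fact (k-1) * (real k - r)^2 * (S + r^k / (fact (k-1) * (real k - r)))
       = 2 * fact (k-1) * ((real k - r)^2 * S + r^k * (real k - r) / fact (k - 1))"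
      using kr f by (simp add: field_simps power2_eq_square)
    have num: "mu * r * (s + 1/mu^2) * r^(k-1) = (mu * (s + 1/mu^2)) * r^k" by (simp add: rk)
    show ?thesis unfolding den num by simp
  qed
  finally show ?thesis unfolding hq_def r_def[symmetric] S_def .
qed

lemma Q_props:
  assumes k: "k \<ge> 1" and mu: "mu > 0" and lam: "lam > 0" and s: "s \<ge> 0" and L: "L > 0"
    and full: "real k * mu > 2 * L * lam"
  shows "waitq k mu s lam 0 = 0"
    and "continuous_on {0..2*L} (waitq k mu s lam)"
    and "\<And>a b. 0 \<le> a \<Longrightarrow> a < b \<Longrightarrow> b \<le> 2*L \<Longrightarrow> waitq k mu s lam a < waitq k mu s lam b"
proof -
  define c where "c = mu * (s + 1 / mu^2) / (2 * fact (k - 1))"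
  have c: "c > 0" unfolding c_def using mu s by (intro divide_pos_pos mult_pos_pos add_nonneg_pos) auto
  have rl: "a * lam / mu < real k" if "a \<le> 2*L" for a
  proof -
    have "a * lam \<le> 2 * L * lam" using that lam by simp
    also have "\<dots> < real k * mu" using full .
    finally show ?thesis using mu by (simp add: divide_less_eq)
  qed
  have eq: "waitq k mu s lam a = c * hq k (a * lam / mu)" if "0 \<le> a" "a \<le> 2*L" for a
    unfolding c_def using waitq_eq[OF k mu lam that(1) rl[OF that(2)]] .
  show "waitq k mu s lam 0 = 0" using eq[of 0] L k by (simp add: hq_def)
  show "waitq k mu s lam a < waitq k mu s lam b" if "0 \<le> a" "a < b" "b \<le> 2*L" for a b
  proof -
    have "hq k (a * lam / mu) < hq k (b * lam / mu)"
      using that mu lam rl[of b] by (intro hq_mono[OF k]) (auto intro!: divide_strict_right_mono mult_strict_right_mono)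
    thus ?thesis using eq[of a] eq[of b] that c by simp
  qed
  have dnz: "(real k - a * lam / mu)\<^sup>2 * (\<Sum>m<k. (a * lam / mu) ^ m / fact m) +
           (a * lam / mu) ^ k * (real k - a * lam / mu) / fact (k - 1) \<noteq> 0" if "a \<in> {0..2*L}" for a
      using den_pos[of "a * lam / mu" k] rl[of a] k mu lam that by auto
  have "continuous_on {0..2*L} (\<lambda>a. c * hq k (a * lam / mu))"
    unfolding hq_def using mu dnz by (intro continuous_intros) auto
  moreover have "continuous_on {0..2*L} (waitq k mu s lam) = continuous_on {0..2*L} (\<lambda>a. c * hq k (a * lam / mu))"
    by (intro continuous_on_cong) (auto simp: eq)
  ultimately show "continuous_on {0..2*L} (waitq k mu s lam)" by simp
qed

lemma pt:
  assumes "0 \<le> w" "w \<le> 1"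
  shows "(max (ereal u1) (ereal u2) \<le> ereal w * ereal u1 + ereal (1-w) * ereal u2) \<longleftrightarrow>
         ((u1 > u2 \<longrightarrow> w = 1) \<and> (u1 < u2 \<longrightarrow> w = 0))"
proof -
  have "(max (ereal u1) (ereal u2) \<le> ereal w * ereal u1 + ereal (1-w) * ereal u2) \<longleftrightarrow>
        max u1 u2 \<le> w * u1 + (1-w) * u2" by simp
  also have "\<dots> \<longleftrightarrow> ((u1 > u2 \<longrightarrow> w = 1) \<and> (u1 < u2 \<longrightarrow> w = 0))"
  proof (cases u1 u2 rule: linorder_cases)
    case less
    have "max u1 u2 \<le> w * u1 + (1-w) * u2 \<longleftrightarrow> w * (u2 - u1) \<le> 0" using less by (simp add: algebra_simps)
    also have "\<dots> \<longleftrightarrow> w = 0" using less assms by (auto simp: mult_le_0_iff)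
    finally show ?thesis using less by simp
  next
    case equal then show ?thesis by (simp add: algebra_simps)
  next
    case greater
    have "max u1 u2 \<le> w * u1 + (1-w) * u2 \<longleftrightarrow> (1 - w) * (u1 - u2) \<le> 0" using greater by (simp add: algebra_simps)
    also have "\<dots> \<longleftrightarrow> w = 1" using greater assms by (auto simp: mult_le_0_iff)
    finally show ?thesis using greater by simp
  qed
  finally show ?thesis .
qed

lemma profile_int:
  assumes "is_profile L \<omega>" "L > 0"
  shows "0 \<le> integral {-L..L} \<omega>" "integral {-L..L} \<omega> \<le> 2 * L"
proof -
  have i: "\<omega> integrable_on {-L..L}" and b: "\<And>x. x \<in> {-L..L} \<Longrightarrow> 0 \<le> \<omega> x \<and> \<omega> x \<le> 1"
    using assms unfolding is_profile_def by auto
  show "0 \<le> integral {-L..L} \<omega>" using i b by (intro integral_nonneg) auto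
  have "integral {-L..L} \<omega> \<le> integral {-L..L} (\<lambda>x. 1::real)"
    using i b by (intro integral_le) auto
  also have "\<dots> = 2 * L" using assms by simp
  finally show "integral {-L..L} \<omega> \<le> 2 * L" .
qed

lemma payoff_eq: "payoff kl kq kp d xi (ereal q) pr x = ereal (- (kl * \<bar>x - xi\<bar>) - kq * q - kp * d * pr)"
  unfolding payoff_def by simp

lemma ext_eq:
  assumes "0 \<le> a" "a \<le> 2 * L" "real k * mu > 2 * L * lam" "lam > 0"
  shows "waitq_ext k mu s lam a = ereal (waitq k mu s lam a)"
proof -
  have "a * lam \<le> 2 * L * lam" using assms by (intro mult_right_mono) auto
  then have "a * lam < real k * mu" using assms by linarith
  then have "\<not> a \<ge> real k * mu / lam" using assms by (auto simp: divide_le_eq)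
  thus ?thesis unfolding waitq_ext_def by simp
qed

lemma NE_char:
  assumes L: "L > 0" and lam: "lam > 0"
    and full1: "real k1 * mu1 > 2 * L * lam" and full2: "real k2 * mu2 > 2 * L * lam"
    and prof: "is_profile L \<omega>"
  shows "is_NE L lam kl kq kp d x1 k1 mu1 s1 p1 x2 k2 mu2 s2 p2 \<omega> \<longleftrightarrow>
    (\<forall>x\<in>{-L..L}.
      (0 < kl * (\<bar>x - x2\<bar> - \<bar>x - x1\<bar>) - kq * (waitq k1 mu1 s1 lam (integral {-L..L} \<omega>)
          - waitq k2 mu2 s2 lam (2 * L - integral {-L..L} \<omega>)) - kp * d * (p1 - p2) \<longrightarrow> \<omega> x = 1) \<and>
      (kl * (\<bar>x - x2\<bar> - \<bar>x - x1\<bar>) - kq * (waitq k1 mu1 s1 lam (integral {-L..L} \<omega>)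
          - waitq k2 mu2 s2 lam (2 * L - integral {-L..L} \<omega>)) - kp * d * (p1 - p2) < 0 \<longrightarrow> \<omega> x = 0))"
proof -
  define a1 where "a1 = integral {-L..L} \<omega>"
  have a1: "0 \<le> a1" "a1 \<le> 2 * L" using profile_int[OF prof L] unfolding a1_def by auto
  have e1: "waitq_ext k1 mu1 s1 lam a1 = ereal (waitq k1 mu1 s1 lam a1)"
    using ext_eq[OF a1 full1 lam] .
  have e2: "waitq_ext k2 mu2 s2 lam (2 * L - a1) = ereal (waitq k2 mu2 s2 lam (2 * L - a1))"
    using ext_eq[OF _ _ full2 lam] a1 by auto
  have b: "\<And>x. x \<in> {-L..L} \<Longrightarrow> 0 \<le> \<omega> x \<and> \<omega> x \<le> 1"
    using prof unfolding is_profile_def by auto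
  have "is_NE L lam kl kq kp d x1 k1 mu1 s1 p1 x2 k2 mu2 s2 p2 \<omega> \<longleftrightarrow>
    (\<forall>x\<in>{-L..L}. max (ereal (- (kl * \<bar>x - x1\<bar>) - kq * waitq k1 mu1 s1 lam a1 - kp * d * p1))
                          (ereal (- (kl * \<bar>x - x2\<bar>) - kq * waitq k2 mu2 s2 lam (2 * L - a1) - kp * d * p2))
       \<le> ereal (\<omega> x) * ereal (- (kl * \<bar>x - x1\<bar>) - kq * waitq k1 mu1 s1 lam a1 - kp * d * p1)
         + ereal (1 - \<omega> x) * ereal (- (kl * \<bar>x - x2\<bar>) - kq * waitq k2 mu2 s2 lam (2 * L - a1) - kp * d * p2))"
    unfolding is_NE_def Let_def a1_def[symmetric] e1 e2 payoff_eq using prof by blast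
  also have "\<dots> \<longleftrightarrow> (\<forall>x\<in>{-L..L}.
      (0 < kl * (\<bar>x - x2\<bar> - \<bar>x - x1\<bar>) - kq * (waitq k1 mu1 s1 lam a1
          - waitq k2 mu2 s2 lam (2 * L - a1)) - kp * d * (p1 - p2) \<longrightarrow> \<omega> x = 1) \<and>
      (kl * (\<bar>x - x2\<bar> - \<bar>x - x1\<bar>) - kq * (waitq k1 mu1 s1 lam a1
          - waitq k2 mu2 s2 lam (2 * L - a1)) - kp * d * (p1 - p2) < 0 \<longrightarrow> \<omega> x = 0))"
  proof (rule ball_cong[OF refl], goal_cases)
    case (1 x)
    note x = 1
    define u1 where "u1 = - (kl * \<bar>x - x1\<bar>) - kq * waitq k1 mu1 s1 lam a1 - kp * d * p1"
    define u2 where "u2 = - (kl * \<bar>x - x2\<bar>) - kq * waitq k2 mu2 s2 lam (2 * L - a1) - kp * d * p2"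
    have D: "kl * (\<bar>x - x2\<bar> - \<bar>x - x1\<bar>) - kq * (waitq k1 mu1 s1 lam a1
          - waitq k2 mu2 s2 lam (2 * L - a1)) - kp * d * (p1 - p2) = u1 - u2"
      unfolding u1_def u2_def by (simp add: algebra_simps)
    show ?case
      apply (subst D)+
      unfolding u1_def[symmetric] u2_def[symmetric]
      using pt[of "\<omega> x" u1 u2] b[OF x] by auto
  qed
  finally show ?thesis unfolding a1_def[symmetric] .
qed

lemma step_int_le:
  fixes L t :: real
  assumes "-L \<le> t" "t \<le> L"
  shows "((\<lambda>x. if x \<le> t then \<alpha> else \<beta>) has_integral (\<alpha> * (t + L) + \<beta> * (L - t))) {-L..L}"
proof -
  have 1: "((\<lambda>x. if x \<in> {-L..t} then \<alpha> - \<beta> else 0) has_integral ((t + L) * (\<alpha> - \<beta>))) {-L..L}"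
    using has_integral_restrict[of "{-L..t}" "{-L..L}" "\<lambda>x. \<alpha> - \<beta>"] has_integral_const_real[of "\<alpha> - \<beta>" "-L" t] assms
    by simp
  have 2: "((\<lambda>x. \<beta>) has_integral (2 * L * \<beta>)) {-L..L}"
    using has_integral_const_real[of \<beta> "-L" L] assms by simp
  have 3: "((\<lambda>x. \<beta> + (if x \<in> {-L..t} then \<alpha> - \<beta> else 0)) has_integral (2 * L * \<beta> + (t + L) * (\<alpha> - \<beta>))) {-L..L}"
    by (rule has_integral_add[OF 2 1])
  have e: "2 * L * \<beta> + (t + L) * (\<alpha> - \<beta>) = \<alpha> * (t + L) + \<beta> * (L - t)" by (simp add: algebra_simps)
  show ?thesis
    by (rule has_integral_spike[OF negligible_empty _ 3[unfolded e]]) auto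
qed

lemma step_int_less:
  fixes L t :: real
  assumes "-L \<le> t" "t \<le> L"
  shows "((\<lambda>x. if x < t then \<alpha> else \<beta>) has_integral (\<alpha> * (t + L) + \<beta> * (L - t))) {-L..L}"
  by (rule has_integral_spike[OF negligible_sing[of t] _ step_int_le[OF assms]]) auto

lemma root_unique:
  fixes G :: "real \<Rightarrow> real"
  assumes "continuous_on {0..1} G" "\<And>a b. 0 \<le> a \<Longrightarrow> a < b \<Longrightarrow> b \<le> 1 \<Longrightarrow> G a < G b"
    "G 0 \<le> 0" "0 \<le> G 1"
  shows "\<exists>!w. w \<in> {0..1} \<and> G w = 0"
proof -
  obtain w where w: "0 \<le> w" "w \<le> 1" "G w = 0" using IVT'[of G 0 0 1] assms by auto
  show ?thesis
  proof (rule ex1I[of _ w])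
    show "w \<in> {0..1} \<and> G w = 0" using w by auto
    fix v assume v: "v \<in> {0..1} \<and> G v = 0"
    show "v = w"
    proof (rule ccontr)
      assume "v \<noteq> w"
      then consider "v < w" | "w < v" by linarith
      then show False using assms(2)[of v w] assms(2)[of w v] v w by cases auto
    qed
  qed
qed



lemma case1:
  fixes L lam kl kq kp d x1 x2 mu1 mu2 s1 s2 p1 p2 :: real and k1 k2 :: nat
  assumes L: "L > 0" and x: "-L < x1" "x1 < x2" "x2 < L"
    and k: "k1 \<ge> 1" "k2 \<ge> 1" and mu: "mu1 > 0" "mu2 > 0"
    and s: "s1 \<ge> 0" "s2 \<ge> 0" and pos: "lam > 0" "kl > 0" "kq > 0" "kp > 0" "d > 0"
    and full1: "real k1 * mu1 > 2 * L * lam" and full2: "real k2 * mu2 > 2 * L * lam"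
    and th1: "(kq * (waitq k2 mu2 s2 lam (L - x1) - waitq k1 mu1 s1 lam (x1 + L)) + kl * (x2 - x1)) / (kp * d) \<le> p1 - p2"
    and th2: "p1 - p2 < (kq * waitq k2 mu2 s2 lam (2 * L) + kl * (x2 - x1)) / (kp * d)"
  shows "(\<exists>!w. w \<in> {0..1} \<and> kq * (waitq k1 mu1 s1 lam ((x1 + L) * w) - waitq k2 mu2 s2 lam (L - x1 + (x1 + L) * (1 - w)))
                   + kp * d * (p1 - p2) + kl * (x1 - x2) = 0) \<and>
        (\<forall>w. w \<in> {0..1} \<and> kq * (waitq k1 mu1 s1 lam ((x1 + L) * w) - waitq k2 mu2 s2 lam (L - x1 + (x1 + L) * (1 - w)))
                   + kp * d * (p1 - p2) + kl * (x1 - x2) = 0 \<longrightarrow>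
            is_NE L lam kl kq kp d x1 k1 mu1 s1 p1 x2 k2 mu2 s2 p2 (\<lambda>x. if x < x1 then w else 0) \<and>
            (\<forall>\<omega>. is_NE L lam kl kq kp d x1 k1 mu1 s1 p1 x2 k2 mu2 s2 p2 \<omega> \<longrightarrow>
                integral {-L..L} \<omega> = (x1 + L) * w \<and> (\<forall>x\<in>{x1<..L}. \<omega> x = 0)))"
proof -
  define q1 where "q1 = waitq k1 mu1 s1 lam"
  define q2 where "q2 = waitq k2 mu2 s2 lam"
  note Q1 = Q_props[OF k(1) mu(1) pos(1) s(1) L full1, folded q1_def]
  note Q2 = Q_props[OF k(2) mu(2) pos(1) s(2) L full2, folded q2_def]
  define c where "c = x1 + L"
  have c: "0 < c" "c < 2 * L" using x unfolding c_def by auto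
  define Psi where "Psi = (\<lambda>a. kq * (q1 a - q2 (2 * L - a)) + kp * d * (p1 - p2) + kl * (x1 - x2))"
  have Psi_mono: "Psi a < Psi b" if "0 \<le> a" "a < b" "b \<le> 2 * L" for a b
  proof -
    have "q1 a < q1 b" using Q1(3) that by auto
    moreover have "q2 (2 * L - b) < q2 (2 * L - a)" using Q2(3) that by auto
    ultimately have "q1 a - q2 (2 * L - a) < q1 b - q2 (2 * L - b)" by linarith
    then show ?thesis unfolding Psi_def using pos by simp
  qed
  have Psi_cont: "continuous_on {0..2*L} Psi"
  proof -
    have "continuous_on {0..2*L} (\<lambda>a. q2 (2 * L - a))"
      by (rule continuous_on_compose2[OF Q2(2)]) (auto intro!: continuous_intros)
    then show ?thesis unfolding Psi_def using Q1(2) by (intro continuous_intros) auto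
  qed
  have F: "kq * (q1 ((x1 + L) * w) - q2 (L - x1 + (x1 + L) * (1 - w))) + kp * d * (p1 - p2) + kl * (x1 - x2)
      = Psi (c * w)" for w
  proof -
    have "q2 (L - x1 + (x1 + L) * (1 - w)) = q2 (2 * L - c * w)"
      by (rule arg_cong[where f=q2]) (simp add: c_def algebra_simps)
    then show ?thesis unfolding Psi_def c_def by simp
  qed
  have kpd: "kp * d > 0" using pos by simp
  have P0: "Psi 0 < 0"
  proof -
    have "kp * d * (p1 - p2) < kq * q2 (2 * L) + kl * (x2 - x1)"
      using th2 kpd unfolding q2_def by (simp add: less_divide_eq mult.commute)
    then show ?thesis unfolding Psi_def using Q1(1) by (simp add: algebra_simps)
  qed
  have Pc: "0 \<le> Psi c"
  proof -
    have "kq * (q2 (L - x1) - q1 (x1 + L)) + kl * (x2 - x1) \<le> kp * d * (p1 - p2)"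
      using th1 kpd unfolding q1_def q2_def by (simp add: divide_le_eq mult.commute)
    moreover have "2 * L - c = L - x1" unfolding c_def by simp
    ultimately show ?thesis unfolding Psi_def c_def by (simp add: algebra_simps)
  qed
  have G_mono: "Psi (c * a) < Psi (c * b)" if "0 \<le> a" "a < b" "b \<le> 1" for a b
  proof (rule Psi_mono)
    show "0 \<le> c * a" using c that by simp
    show "c * a < c * b" using c that by simp
    have "c * b \<le> c * 1" using c that by (intro mult_left_mono) auto
    then show "c * b \<le> 2 * L" using c by linarith
  qed
  have G_cont: "continuous_on {0..1} (\<lambda>w. Psi (c * w))"
  proof (rule continuous_on_compose2[OF Psi_cont])
    show "continuous_on {0..1} ((*) c)" by (intro continuous_intros)
    show "(*) c ` {0..1} \<subseteq> {0..2 * L}"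
    proof
      fix y assume "y \<in> (*) c ` {0..1}"
      then obtain w where w: "0 \<le> w" "w \<le> 1" "y = c * w" by auto
      have "c * w \<le> c" using c w mult_left_le[of w c] by simp
      then have "c * w \<le> 2 * L" using c by linarith
      moreover have "0 \<le> c * w" using c w by simp
      ultimately show "y \<in> {0..2*L}" using w by simp
    qed
  qed
  have ex: "\<exists>!w. w \<in> {0..1} \<and> Psi (c * w) = 0"
    by (rule root_unique[OF G_cont G_mono]) (use P0 Pc in auto)
  have main: "is_NE L lam kl kq kp d x1 k1 mu1 s1 p1 x2 k2 mu2 s2 p2 (\<lambda>x. if x < x1 then w else 0) \<and>
            (\<forall>\<omega>. is_NE L lam kl kq kp d x1 k1 mu1 s1 p1 x2 k2 mu2 s2 p2 \<omega> \<longrightarrow>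
                integral {-L..L} \<omega> = (x1 + L) * w \<and> (\<forall>x\<in>{x1<..L}. \<omega> x = 0))"
    if w: "w \<in> {0..1}" "Psi (c * w) = 0" for w
  proof -
    define A where "A = c * w"
    have A: "0 \<le> A" "A \<le> c" using w c unfolding A_def by (auto intro: mult_left_le)
    have PA: "Psi A = 0" using w unfolding A_def by simp
    have Dform: "kl * (\<bar>x - x2\<bar> - \<bar>x - x1\<bar>) - kq * (q1 a - q2 (2 * L - a)) - kp * d * (p1 - p2)
        = kl * (\<bar>x - x2\<bar> - \<bar>x - x1\<bar> - (x2 - x1)) - Psi a" for x a
      unfolding Psi_def by (simp add: algebra_simps)
    have absle: "\<bar>x - x2\<bar> - \<bar>x - x1\<bar> - (x2 - x1) \<le> 0" for x using x by (auto simp: abs_if)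
    have abseq: "\<bar>x - x2\<bar> - \<bar>x - x1\<bar> - (x2 - x1) = 0" if "x \<le> x1" for x using x that by (auto simp: abs_if)
    have abslt: "\<bar>x - x2\<bar> - \<bar>x - x1\<bar> - (x2 - x1) < 0" if "x > x1" for x using x that by (auto simp: abs_if)
    define \<omega>0 where "\<omega>0 = (\<lambda>x::real. if x < x1 then w else 0)"
    have hi: "(\<omega>0 has_integral (w * (x1 + L) + 0 * (L - x1))) {-L..L}"
      unfolding \<omega>0_def by (rule step_int_less) (use x in auto)
    have int0: "integral {-L..L} \<omega>0 = A" using hi unfolding A_def c_def by (simp add: integral_unique mult.commute)
    have prof0: "is_profile L \<omega>0" unfolding is_profile_def using hi w by (auto simp: \<omega>0_def)
    have klE: "kl * (\<bar>x - x2\<bar> - \<bar>x - x1\<bar> - (x2 - x1)) \<le> 0" for x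
      using mult_nonneg_nonpos[of kl] absle[of x] pos(2) by simp
    have klE2: "kl * (\<bar>x - x2\<bar> - \<bar>x - x1\<bar> - (x2 - x1)) < 0" if "x > x1" for x
      using mult_pos_neg[of kl] abslt[OF that] pos(2) by simp
    have "\<forall>x\<in>{-L..L}. (0 < kl * (\<bar>x - x2\<bar> - \<bar>x - x1\<bar> - (x2 - x1)) - Psi A \<longrightarrow> \<omega>0 x = 1) \<and>
                 (kl * (\<bar>x - x2\<bar> - \<bar>x - x1\<bar> - (x2 - x1)) - Psi A < 0 \<longrightarrow> \<omega>0 x = 0)"
    proof (intro ballI conjI impI)
      fix x assume "0 < kl * (\<bar>x - x2\<bar> - \<bar>x - x1\<bar> - (x2 - x1)) - Psi A"
      then show "\<omega>0 x = 1" using klE[of x] PA by linarith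
    next
      fix x assume h: "kl * (\<bar>x - x2\<bar> - \<bar>x - x1\<bar> - (x2 - x1)) - Psi A < 0"
      show "\<omega>0 x = 0"
      proof (cases "x < x1")
        case True
        then show ?thesis using h abseq[of x] PA by simp
      next
        case False
        then show ?thesis unfolding \<omega>0_def by simp
      qed
    qed
    then have NE0: "is_NE L lam kl kq kp d x1 k1 mu1 s1 p1 x2 k2 mu2 s2 p2 \<omega>0"
      unfolding NE_char[OF L pos(1) full1 full2 prof0] int0 q1_def[symmetric] q2_def[symmetric] Dform .
    have uniq: "integral {-L..L} \<omega> = (x1 + L) * w \<and> (\<forall>x\<in>{x1<..L}. \<omega> x = 0)"
      if NE: "is_NE L lam kl kq kp d x1 k1 mu1 s1 p1 x2 k2 mu2 s2 p2 \<omega>" for \<omega>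
    proof -
      have prof: "is_profile L \<omega>" using NE unfolding is_NE_def by simp
      define a where "a = integral {-L..L} \<omega>"
      have a: "0 \<le> a" "a \<le> 2 * L" using profile_int[OF prof L] unfolding a_def by auto
      have pw: "\<And>x. x \<in> {-L..L} \<Longrightarrow> (0 < kl * (\<bar>x - x2\<bar> - \<bar>x - x1\<bar> - (x2 - x1)) - Psi a \<longrightarrow> \<omega> x = 1) \<and>
                 (kl * (\<bar>x - x2\<bar> - \<bar>x - x1\<bar> - (x2 - x1)) - Psi a < 0 \<longrightarrow> \<omega> x = 0)"
        using NE unfolding NE_char[OF L pos(1) full1 full2 prof] a_def[symmetric] q1_def[symmetric] q2_def[symmetric] Dform
        by blast
      have b: "\<And>x. x \<in> {-L..L} \<Longrightarrow> 0 \<le> \<omega> x \<and> \<omega> x \<le> 1" and io: "\<omega> integrable_on {-L..L}"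
        using prof unfolding is_profile_def by auto
      have "a = A"
      proof (rule ccontr)
        assume "a \<noteq> A"
        then consider "a > A" | "a < A" by linarith
        then show False
        proof cases
          case 1
          then have "Psi a > 0" using Psi_mono[of A a] A a c PA by simp
          then have "\<omega> x = 0" if "x \<in> {-L..L}" for x
            using pw[OF that] klE[of x] \<open>Psi a > 0\<close> by linarith
          then have "a = integral {-L..L} (\<lambda>x. 0::real)" unfolding a_def by (rule integral_cong)
          then show False using 1 A by simp
        next
          case 2
          then have "Psi a < 0" using Psi_mono[of a A] A a c PA by simp
          then have o1: "\<omega> x = 1" if "x \<in> {-L..L}" "x \<le> x1" for x
            using pw[OF that(1)] abseq[OF that(2)] by simp
          have hg: "((\<lambda>x. if x \<le> x1 then 1 else 0) has_integral (1 * (x1 + L) + 0 * (L - x1))) {-L..L}"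
            by (rule step_int_le) (use x in auto)
          have "integral {-L..L} (\<lambda>x. if x \<le> x1 then 1 else 0) \<le> a"
            unfolding a_def using hg io b o1 by (intro integral_le) auto
          then have "c \<le> a" using hg unfolding c_def by (simp add: integral_unique)
          then show False using 2 A by simp
        qed
      qed
      then have "Psi a = 0" using PA by simp
      have "\<forall>x\<in>{x1<..L}. \<omega> x = 0"
      proof
        fix x assume xx: "x \<in> {x1<..L}"
        then have "x \<in> {-L..L}" using x by auto
        then show "\<omega> x = 0" using pw[of x] klE2[of x] xx \<open>Psi a = 0\<close> by simp
      qed
      with \<open>a = A\<close> show ?thesis unfolding a_def A_def c_def by simp
    qed
    show ?thesis using NE0 uniq unfolding \<omega>0_def by blast
  qed
  show ?thesis unfolding q1_def[symmetric] q2_def[symmetric] F using ex main by blast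
qed



lemma case2:
  fixes L lam kl kq kp d x1 x2 mu1 mu2 s1 s2 p1 p2 :: real and k1 k2 :: nat
  assumes L: "L > 0" and x: "-L < x1" "x1 < x2" "x2 < L"
    and k: "k1 \<ge> 1" "k2 \<ge> 1" and mu: "mu1 > 0" "mu2 > 0"
    and s: "s1 \<ge> 0" "s2 \<ge> 0" and pos: "lam > 0" "kl > 0" "kq > 0" "kp > 0" "d > 0"
    and full1: "real k1 * mu1 > 2 * L * lam" and full2: "real k2 * mu2 > 2 * L * lam"
    and th1: "- (kq * waitq k1 mu1 s1 lam (2 * L) + kl * (x2 - x1)) / (kp * d) < p1 - p2"
    and th2: "p1 - p2 \<le> - (kq * (waitq k1 mu1 s1 lam (L + x2) - waitq k2 mu2 s2 lam (L - x2)) + kl * (x2 - x1)) / (kp * d)"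
  shows "(\<exists>!w. w \<in> {0..1} \<and> kq * (waitq k2 mu2 s2 lam ((L - x2) * (1 - w)) - waitq k1 mu1 s1 lam (x2 + L + (L - x2) * w))
                   + kp * d * (p2 - p1) + kl * (x1 - x2) = 0) \<and>
        (\<forall>w. w \<in> {0..1} \<and> kq * (waitq k2 mu2 s2 lam ((L - x2) * (1 - w)) - waitq k1 mu1 s1 lam (x2 + L + (L - x2) * w))
                   + kp * d * (p2 - p1) + kl * (x1 - x2) = 0 \<longrightarrow>
            is_NE L lam kl kq kp d x1 k1 mu1 s1 p1 x2 k2 mu2 s2 p2 (\<lambda>x. if x \<le> x2 then 1 else w) \<and>
            (\<forall>\<omega>. is_NE L lam kl kq kp d x1 k1 mu1 s1 p1 x2 k2 mu2 s2 p2 \<omega> \<longrightarrow>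
                integral {-L..L} \<omega> = (x2 + L) + (L - x2) * w \<and> (\<forall>x\<in>{-L..<x2}. \<omega> x = 1)))"
proof -
  define q1 where "q1 = waitq k1 mu1 s1 lam"
  define q2 where "q2 = waitq k2 mu2 s2 lam"
  note Q1 = Q_props[OF k(1) mu(1) pos(1) s(1) L full1, folded q1_def]
  note Q2 = Q_props[OF k(2) mu(2) pos(1) s(2) L full2, folded q2_def]
  define B where "B = x2 + L"
  define e where "e = L - x2"
  have Be: "0 < B" "0 < e" "B + e = 2 * L" using x unfolding B_def e_def by auto
  define Psi where "Psi = (\<lambda>a. kq * (q2 (2 * L - a) - q1 a) + kp * d * (p2 - p1) + kl * (x1 - x2))"
  have Psi_mono: "Psi b < Psi a" if "0 \<le> a" "a < b" "b \<le> 2 * L" for a b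
  proof -
    have "q1 a < q1 b" using Q1(3) that by auto
    moreover have "q2 (2 * L - b) < q2 (2 * L - a)" using Q2(3) that by auto
    ultimately have "q2 (2 * L - b) - q1 b < q2 (2 * L - a) - q1 a" by linarith
    then show ?thesis unfolding Psi_def using pos by simp
  qed
  have Psi_cont: "continuous_on {0..2*L} Psi"
  proof -
    have "continuous_on {0..2*L} (\<lambda>a. q2 (2 * L - a))"
      by (rule continuous_on_compose2[OF Q2(2)]) (auto intro!: continuous_intros)
    then show ?thesis unfolding Psi_def using Q1(2) by (intro continuous_intros) auto
  qed
  have F: "kq * (q2 ((L - x2) * (1 - w)) - q1 (x2 + L + (L - x2) * w)) + kp * d * (p2 - p1) + kl * (x1 - x2)
      = Psi (B + e * w)" for w
  proof -
    have "q2 ((L - x2) * (1 - w)) = q2 (2 * L - (B + e * w))"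
      by (rule arg_cong[where f=q2]) (simp add: B_def e_def algebra_simps)
    moreover have "q1 (x2 + L + (L - x2) * w) = q1 (B + e * w)" unfolding B_def e_def ..
    ultimately show ?thesis unfolding Psi_def by simp
  qed
  have kpd: "kp * d > 0" using pos by simp
  have P1: "Psi (2 * L) < 0"
  proof -
    have "- (kq * q1 (2 * L) + kl * (x2 - x1)) < kp * d * (p1 - p2)"
      using th1 kpd unfolding q1_def by (simp add: divide_less_eq mult.commute)
    then show ?thesis unfolding Psi_def using Q2(1) by (simp add: algebra_simps)
  qed
  have P0: "0 \<le> Psi B"
  proof -
    have LB: "L + x2 = B" unfolding B_def by simp
    have eqq: "2 * L - B = L - x2" unfolding B_def by simp
    have "kp * d * (p1 - p2) \<le> - (kq * (q1 (L + x2) - q2 (L - x2)) + kl * (x2 - x1))"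
      using th2 kpd unfolding q1_def q2_def by (simp add: le_divide_eq mult.commute)
    then have "kp * d * (p1 - p2) \<le> - (kq * (q1 B - q2 (L - x2)) + kl * (x2 - x1))"
      unfolding LB .
    then show ?thesis unfolding Psi_def eqq by (simp add: algebra_simps)
  qed
  have G_mono: "- Psi (B + e * a) < - Psi (B + e * b)" if "0 \<le> a" "a < b" "b \<le> 1" for a b
  proof -
    have "Psi (B + e * b) < Psi (B + e * a)"
    proof (rule Psi_mono)
      show "0 \<le> B + e * a" using Be that by simp
      show "B + e * a < B + e * b" using Be that by simp
      have "e * b \<le> e" using Be that mult_left_le[of b e] by simp
      then show "B + e * b \<le> 2 * L" using Be by linarith
    qed
    then show ?thesis by simp
  qed
  have G_cont: "continuous_on {0..1} (\<lambda>w. - Psi (B + e * w))"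
  proof -
    have "continuous_on {0..1} (\<lambda>w. Psi (B + e * w))"
    proof (rule continuous_on_compose2[OF Psi_cont])
      show "continuous_on {0..1} (\<lambda>w. B + e * w)" by (intro continuous_intros)
      show "(\<lambda>w. B + e * w) ` {0..1} \<subseteq> {0..2 * L}"
      proof
        fix y assume "y \<in> (\<lambda>w. B + e * w) ` {0..1}"
        then obtain w where w: "0 \<le> w" "w \<le> 1" "y = B + e * w" by auto
        have "e * w \<le> e" using Be w mult_left_le[of w e] by simp
        then have "B + e * w \<le> 2 * L" using Be by linarith
        moreover have "0 \<le> e * w" using Be w by simp
        ultimately show "y \<in> {0..2*L}" using w Be by simp
      qed
    qed
    then show ?thesis by (intro continuous_intros)
  qed
  have ex: "\<exists>!w. w \<in> {0..1} \<and> - Psi (B + e * w) = 0"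
    by (rule root_unique[OF G_cont G_mono]) (use P0 P1 Be in auto)
  then have ex': "\<exists>!w. w \<in> {0..1} \<and> Psi (B + e * w) = 0" by simp
  have main: "is_NE L lam kl kq kp d x1 k1 mu1 s1 p1 x2 k2 mu2 s2 p2 (\<lambda>x. if x \<le> x2 then 1 else w) \<and>
            (\<forall>\<omega>. is_NE L lam kl kq kp d x1 k1 mu1 s1 p1 x2 k2 mu2 s2 p2 \<omega> \<longrightarrow>
                integral {-L..L} \<omega> = (x2 + L) + (L - x2) * w \<and> (\<forall>x\<in>{-L..<x2}. \<omega> x = 1))"
    if w: "w \<in> {0..1}" "Psi (B + e * w) = 0" for w
  proof -
    define A where "A = B + e * w"
    have ew: "e * w \<le> e" "0 \<le> e * w" using Be w mult_left_le[of w e] by auto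
    have A: "B \<le> A" "A \<le> 2 * L" using ew Be unfolding A_def by linarith+
    have PA: "Psi A = 0" using w unfolding A_def by simp
    have Dform: "kl * (\<bar>x - x2\<bar> - \<bar>x - x1\<bar>) - kq * (q1 a - q2 (2 * L - a)) - kp * d * (p1 - p2)
        = kl * (\<bar>x - x2\<bar> - \<bar>x - x1\<bar> + (x2 - x1)) + Psi a" for x a
      unfolding Psi_def by (simp add: algebra_simps)
    have absge: "0 \<le> \<bar>x - x2\<bar> - \<bar>x - x1\<bar> + (x2 - x1)" for x using x by (auto simp: abs_if)
    have abseq: "\<bar>x - x2\<bar> - \<bar>x - x1\<bar> + (x2 - x1) = 0" if "x2 \<le> x" for x using x that by (auto simp: abs_if)
    have absgt: "0 < \<bar>x - x2\<bar> - \<bar>x - x1\<bar> + (x2 - x1)" if "x < x2" for x using x that by (auto simp: abs_if)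
    have klE: "0 \<le> kl * (\<bar>x - x2\<bar> - \<bar>x - x1\<bar> + (x2 - x1))" for x
      using absge[of x] pos(2) by simp
    have klE2: "0 < kl * (\<bar>x - x2\<bar> - \<bar>x - x1\<bar> + (x2 - x1))" if "x < x2" for x
      using absgt[OF that] pos(2) by simp
    define \<omega>0 where "\<omega>0 = (\<lambda>x::real. if x \<le> x2 then 1 else w)"
    have hi: "(\<omega>0 has_integral (1 * (x2 + L) + w * (L - x2))) {-L..L}"
      unfolding \<omega>0_def by (rule step_int_le) (use x in auto)
    have int0: "integral {-L..L} \<omega>0 = A" using hi unfolding A_def B_def e_def by (simp add: integral_unique mult.commute)
    have prof0: "is_profile L \<omega>0" unfolding is_profile_def using hi w by (auto simp: \<omega>0_def)
    have "\<forall>x\<in>{-L..L}. (0 < kl * (\<bar>x - x2\<bar> - \<bar>x - x1\<bar> + (x2 - x1)) + Psi A \<longrightarrow> \<omega>0 x = 1) \<and>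
                 (kl * (\<bar>x - x2\<bar> - \<bar>x - x1\<bar> + (x2 - x1)) + Psi A < 0 \<longrightarrow> \<omega>0 x = 0)"
    proof (intro ballI conjI impI)
      fix x assume h: "0 < kl * (\<bar>x - x2\<bar> - \<bar>x - x1\<bar> + (x2 - x1)) + Psi A"
      show "\<omega>0 x = 1"
      proof (cases "x \<le> x2")
        case True
        then show ?thesis unfolding \<omega>0_def by simp
      next
        case False
        then show ?thesis using h abseq[of x] PA by simp
      qed
    next
      fix x assume "kl * (\<bar>x - x2\<bar> - \<bar>x - x1\<bar> + (x2 - x1)) + Psi A < 0"
      then show "\<omega>0 x = 0" using klE[of x] PA by linarith
    qed
    then have NE0: "is_NE L lam kl kq kp d x1 k1 mu1 s1 p1 x2 k2 mu2 s2 p2 \<omega>0"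
      unfolding NE_char[OF L pos(1) full1 full2 prof0] int0 q1_def[symmetric] q2_def[symmetric] Dform .
    have uniq: "integral {-L..L} \<omega> = (x2 + L) + (L - x2) * w \<and> (\<forall>x\<in>{-L..<x2}. \<omega> x = 1)"
      if NE: "is_NE L lam kl kq kp d x1 k1 mu1 s1 p1 x2 k2 mu2 s2 p2 \<omega>" for \<omega>
    proof -
      have prof: "is_profile L \<omega>" using NE unfolding is_NE_def by simp
      define a where "a = integral {-L..L} \<omega>"
      have a: "0 \<le> a" "a \<le> 2 * L" using profile_int[OF prof L] unfolding a_def by auto
      have pw: "\<And>x. x \<in> {-L..L} \<Longrightarrow> (0 < kl * (\<bar>x - x2\<bar> - \<bar>x - x1\<bar> + (x2 - x1)) + Psi a \<longrightarrow> \<omega> x = 1) \<and>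
                 (kl * (\<bar>x - x2\<bar> - \<bar>x - x1\<bar> + (x2 - x1)) + Psi a < 0 \<longrightarrow> \<omega> x = 0)"
        using NE unfolding NE_char[OF L pos(1) full1 full2 prof] a_def[symmetric] q1_def[symmetric] q2_def[symmetric] Dform
        by blast
      have b: "\<And>x. x \<in> {-L..L} \<Longrightarrow> 0 \<le> \<omega> x \<and> \<omega> x \<le> 1" and io: "\<omega> integrable_on {-L..L}"
        using prof unfolding is_profile_def by auto
      have "a = A"
      proof (rule ccontr)
        assume "a \<noteq> A"
        then consider "a < A" | "a > A" by linarith
        then show False
        proof cases
          case 1
          then have "Psi a > 0" using Psi_mono[of a A] A a Be PA by simp
          then have "\<omega> x = 1" if "x \<in> {-L..L}" for x
            using pw[OF that] klE[of x] by linarith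
          then have "a = integral {-L..L} (\<lambda>x. 1::real)" unfolding a_def by (rule integral_cong)
          then show False using 1 A L by simp
        next
          case 2
          then have "Psi a < 0" using Psi_mono[of A a] A a Be PA by simp
          then have o0: "\<omega> x = 0" if "x \<in> {-L..L}" "x2 \<le> x" for x
            using pw[OF that(1)] abseq[OF that(2)] by simp
          have hg: "((\<lambda>x. if x \<le> x2 then 1 else 0) has_integral (1 * (x2 + L) + 0 * (L - x2))) {-L..L}"
            by (rule step_int_le) (use x in auto)
          have "a \<le> integral {-L..L} (\<lambda>x. if x \<le> x2 then 1 else 0)"
            unfolding a_def using hg io b o0 by (intro integral_le) auto
          then have "a \<le> B" using hg unfolding B_def by (simp add: integral_unique)
          then show False using 2 A by simp
        qed
      qed
      then have "Psi a = 0" using PA by simp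
      have "\<forall>x\<in>{-L..<x2}. \<omega> x = 1"
      proof
        fix x assume xx: "x \<in> {-L..<x2}"
        then have "x \<in> {-L..L}" using x by auto
        then show "\<omega> x = 1" using pw[of x] klE2[of x] xx \<open>Psi a = 0\<close> by simp
      qed
      with \<open>a = A\<close> show ?thesis unfolding a_def A_def B_def e_def by simp
    qed
    show ?thesis using NE0 uniq unfolding \<omega>0_def by blast
  qed
  show ?thesis unfolding q1_def[symmetric] q2_def[symmetric] F using ex' main by blast
qed

theorem theorem2:
  fixes L lam kl kq kp d x1 x2 mu1 mu2 s1 s2 p1 p2 pmin pmax :: real
    and k1 k2 :: nat
  assumes "L > 0" and "-L < x1" and "x1 < x2" and "x2 < L"
    and "k1 \<ge> 1" and "k2 \<ge> 1" and "mu1 > 0" and "mu2 > 0"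
    and "s1 \<ge> 0" and "s2 \<ge> 0"  (* service-time variances sigma_i^2 *)
    and "lam > 0" and "kl > 0" and "kq > 0" and "kp > 0" and "d > 0"
    and "p1 \<in> {pmin..pmax}" and "p2 \<in> {pmin..pmax}"
    and full1: "real k1 * mu1 > 2 * L * lam" and full2: "real k2 * mu2 > 2 * L * lam"
  shows
   "(let q1 = waitq k1 mu1 s1 lam; q2 = waitq k2 mu2 s2 lam;
         thL1 = - (kq * (q1 (L + x2) - q2 (L - x2)) + kl * (x2 - x1)) / (kp * d);
         thR1 = (kq * (q2 (L - x1) - q1 (x1 + L)) + kl * (x2 - x1)) / (kp * d);
         thL2 = - (kq * q1 (2 * L) + kl * (x2 - x1)) / (kp * d);
         thR2 = (kq * q2 (2 * L) + kl * (x2 - x1)) / (kp * d);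
         F1 = (\<lambda>w. kq * (q1 ((x1 + L) * w) - q2 (L - x1 + (x1 + L) * (1 - w)))
                   + kp * d * (p1 - p2) + kl * (x1 - x2));
         F2 = (\<lambda>w. kq * (q2 ((L - x2) * (1 - w)) - q1 (x2 + L + (L - x2) * w))
                   + kp * d * (p2 - p1) + kl * (x1 - x2));
         NE = is_NE L lam kl kq kp d x1 k1 mu1 s1 p1 x2 k2 mu2 s2 p2
     in
     (thR1 \<le> p1 - p2 \<and> p1 - p2 < thR2 \<longrightarrow>
        (\<exists>!w. w \<in> {0..1} \<and> F1 w = 0) \<and>
        (\<forall>w. w \<in> {0..1} \<and> F1 w = 0 \<longrightarrow>
            NE (\<lambda>x. if x < x1 then w else 0) \<and>
            (\<forall>\<omega>. NE \<omega> \<longrightarrow>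
                integral {-L..L} \<omega> = (x1 + L) * w \<and> (\<forall>x\<in>{x1<..L}. \<omega> x = 0))))
     \<and>
     (thL2 < p1 - p2 \<and> p1 - p2 \<le> thL1 \<longrightarrow>
        (\<exists>!w. w \<in> {0..1} \<and> F2 w = 0) \<and>
        (\<forall>w. w \<in> {0..1} \<and> F2 w = 0 \<longrightarrow>
            NE (\<lambda>x. if x \<le> x2 then 1 else w) \<and>
            (\<forall>\<omega>. NE \<omega> \<longrightarrow>
                integral {-L..L} \<omega> = (x2 + L) + (L - x2) * w \<and> (\<forall>x\<in>{-L..<x2}. \<omega> x = 1)))))"
  proof -
  note c1 = case1[OF assms(1-15) full1 full2]
  note c2 = case2[OF assms(1-15) full1 full2]
  show ?thesis unfolding Let_def
    apply (rule conjI; rule impI; elim conjE)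
     apply (rule c1; assumption)
    apply (rule c2; assumption)
    done
qed

end
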